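(* Let $(\mathcal V,\mathcal W,\lambda)$ be a FTvN system. Then: (a) A linear map $A:\mathcal V\to\mathcal V$ belongs to $\operatorname{Aut}(\mathcal V,\mathcal W,\lambda)$ if and only if $A$ is invertible and both $A$ and $A^{-1}$ are doubly stochastic. (b) If $\mathcal V$ is finite dimensional, every $D$ in the convex hull of $\operatorname{Aut}(\mathcal V,\mathcal W,\lambda)$ is doubly stochastic.
   Context: A Fan-Theobald-von Neumann (FTvN) system is a triple $(\mathcal V,\mathcal W,\lambda)$ where $\mathcal V,\mathcal W$ are real inner product spaces and $\lambda:\mathcal V\to\mathcal W$ is a map such that: (A1) $\|\lambda(x)\|=\|x\|$ for all $x$; (A2) $\langle x,y\rangle\le\langle\lambda(x),\lambda(y)\rangle$ for all $x,y$; (A3) for every $c\in\mathcal V$ and $q\in\lambda(\mathcal V)$ there exists $x$ with $\lambda(x)=q$ and $\langle c,x\rangle=\langle\lambda(c),\lambda(x)\rangle$. $[u]=\{z:\lambda(z)=\lambda(u)\}$; $x\prec y$ iff $x\in\operatorname{conv}[y]$. A linear map $D$ is doubly stochastic if $Dx\prec x$ for all $x$. $\operatorname{Aut}(\mathcal V,\mathcal W,\lambda)$ is the set of invertible linear maps $A:\mathcal V\to\mathcal V$ with $\lambda(Ax)=\lambda(x)$ for all $x$. *)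

theory Defs
  imports "HOL-Analysis.Analysis"
begin

text \<open>Fan-Theobald-von Neumann system: lam maps the real inner product space 'a
  (the space V) to the real inner product space 'b (the space W).\<close>
definition FTvN_system :: "('a::real_inner \<Rightarrow> 'b::real_inner) \<Rightarrow> bool" where
  "FTvN_system lam \<longleftrightarrow>
     (\<forall>x. norm (lam x) = norm x) \<and>
     (\<forall>x y. inner x y \<le> inner (lam x) (lam y)) \<and>
     (\<forall>c q. q \<in> range lam \<longrightarrow> (\<exists>x. lam x = q \<and> inner c x = inner (lam c) (lam x)))"

definition lam_class :: "('a \<Rightarrow> 'b) \<Rightarrow> 'a \<Rightarrow> 'a set" where
  "lam_class lam u = {z. lam z = lam u}"

definition majorized :: "('a::real_vector \<Rightarrow> 'b) \<Rightarrow> 'a \<Rightarrow> 'a \<Rightarrow> bool" where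
  "majorized lam x y \<longleftrightarrow> x \<in> convex hull (lam_class lam y)"

definition doubly_stochastic :: "('a::real_vector \<Rightarrow> 'b) \<Rightarrow> ('a \<Rightarrow> 'a) \<Rightarrow> bool" where
  "doubly_stochastic lam D \<longleftrightarrow> linear D \<and> (\<forall>x. majorized lam (D x) x)"

definition Aut :: "('a::real_vector \<Rightarrow> 'b) \<Rightarrow> ('a \<Rightarrow> 'a) set" where
  "Aut lam = {A. linear A \<and> bij A \<and> (\<forall>x. lam (A x) = lam x)}"

definition map_convex_hull :: "('a \<Rightarrow> 'a::real_vector) set \<Rightarrow> ('a \<Rightarrow> 'a) set" where
  "map_convex_hull S = {D. \<exists>(n::nat) (c::nat \<Rightarrow> real) F.
       (\<forall>i<n. 0 \<le> c i \<and> F i \<in> S) \<and> (\<Sum>i<n. c i) = 1 \<and>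
       D = (\<lambda>x. \<Sum>i<n. c i *\<^sub>R F i x)}"

definition finite_dimensional_space :: "'a::real_vector itself \<Rightarrow> bool" where
  "finite_dimensional_space _ \<longleftrightarrow> (\<exists>B::'a set. finite B \<and> span B = UNIV)"

end

theory Submission
  imports Defs
begin

lemma sphere_hull_mem:
  fixes x :: "'a::real_inner"
  assumes S: "\<And>z. z \<in> S \<Longrightarrow> norm z = r" and x: "x \<in> convex hull S" and nx: "norm x = r"
  shows "x \<in> S"
proof -
  obtain T u where T: "finite T" "T \<subseteq> S" "\<forall>v\<in>T. 0 \<le> u v" "sum u T = 1"
     "(\<Sum>v\<in>T. u v *\<^sub>R v) = x"
    using x unfolding convex_hull_explicit by blast
  have le: "inner x v \<le> r*r" if "v \<in> T" for v
  proof -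
    have "inner x v \<le> norm x * norm v" by (rule norm_cauchy_schwarz)
    thus ?thesis using S[of v] that T(2) nx by auto
  qed
  have "r*r = inner x x" by (metis nx power2_norm_eq_inner power2_eq_square)
  also have "\<dots> = (\<Sum>v\<in>T. u v * inner x v)"
    by (subst (2) T(5)[symmetric]) (simp add: inner_sum_right)
  finally have e: "r*r = (\<Sum>v\<in>T. u v * inner x v)" .
  have "(\<Sum>v\<in>T. u v * (r*r - inner x v)) = (\<Sum>v\<in>T. u v) * (r*r) - (\<Sum>v\<in>T. u v * inner x v)"
    by (simp add: right_diff_distrib sum_subtractf sum_distrib_right)
  hence "(\<Sum>v\<in>T. u v * (r*r - inner x v)) = 0" using T(4) e by simp
  moreover have "\<forall>v\<in>T. 0 \<le> u v * (r*r - inner x v)"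
  proof
    fix v assume "v \<in> T"
    thus "0 \<le> u v * (r*r - inner x v)" using T(3) le[of v] by (intro mult_nonneg_nonneg) auto
  qed
  ultimately have z: "\<forall>v\<in>T. u v * (r*r - inner x v) = 0"
    by (subst (asm) sum_nonneg_eq_0_iff[OF T(1)]) auto
  have "\<exists>v\<in>T. u v \<noteq> 0"
  proof (rule ccontr)
    assume "\<not> (\<exists>v\<in>T. u v \<noteq> 0)"
    hence "\<forall>v\<in>T. u v = 0" by blast
    hence "sum u T = 0" by simp
    thus False using T(4) by simp
  qed
  then obtain v where v: "v \<in> T" "u v \<noteq> 0" by blast
  hence iv: "inner x v = r*r" using z by auto
  have "inner (x - v) (x - v) = inner x x - 2 * inner x v + inner v v"
    by (simp add: inner_diff_left inner_diff_right inner_commute)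
  also have "\<dots> = 0"
  proof -
    have "inner x x = r*r" using nx by (metis power2_norm_eq_inner power2_eq_square)
    moreover have "inner v v = r*r" using S[of v] v T(2) by (metis subsetD power2_norm_eq_inner power2_eq_square)
    ultimately show ?thesis using iv by simp
  qed
  finally have "x = v" by simp
  thus ?thesis using v T(2) by auto
qed

lemma norm_hull_le:
  fixes x :: "'a::real_inner"
  assumes S: "\<And>z. z \<in> S \<Longrightarrow> norm z = r" and x: "x \<in> convex hull S"
  shows "norm x \<le> r"
proof -
  have "S \<subseteq> cball 0 r" using S by auto
  hence "convex hull S \<subseteq> cball 0 r" by (simp add: convex_cball hull_minimal)
  thus ?thesis using x by auto
qed

theorem proposition9p4:
  fixes lam :: "'a::real_inner \<Rightarrow> 'b::real_inner"
  assumes "FTvN_system lam"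
  shows "(\<forall>A::'a \<Rightarrow> 'a. linear A \<longrightarrow>
            (A \<in> Aut lam \<longleftrightarrow>
               bij A \<and> doubly_stochastic lam A \<and> doubly_stochastic lam (inv A)))
         \<and> (finite_dimensional_space TYPE('a) \<longrightarrow>
            (\<forall>D \<in> map_convex_hull (Aut lam). doubly_stochastic lam D))"
proof -
  have nl: "\<And>x. norm (lam x) = norm x" using assms unfolding FTvN_system_def by blast
  have cls: "\<And>z y. z \<in> lam_class lam y \<Longrightarrow> norm z = norm y"
    unfolding lam_class_def by (metis mem_Collect_eq nl)
  have inh: "\<And>z y. lam z = lam y \<Longrightarrow> z \<in> convex hull (lam_class lam y)"
    by (rule hull_inc) (simp add: lam_class_def)
  have invlin: "linear (inv A)" if "linear A" "bij A" for A :: "'a \<Rightarrow> 'a"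
  proof (rule linearI)
    fix x y :: 'a and k :: real
    have "A (inv A x + inv A y) = x + y"
      using that by (simp add: linear_add bij_is_surj surj_f_inv_f)
    hence "inv A (A (inv A x + inv A y)) = inv A (x + y)" by simp
    thus "inv A (x + y) = inv A x + inv A y"
      using inv_f_f[OF bij_is_inj[OF that(2)]] by simp
    have "A (k *\<^sub>R inv A x) = k *\<^sub>R x"
      using that by (simp add: linear_scale bij_is_surj surj_f_inv_f)
    hence "inv A (A (k *\<^sub>R inv A x)) = inv A (k *\<^sub>R x)" by simp
    thus "inv A (k *\<^sub>R x) = k *\<^sub>R inv A x"
      using inv_f_f[OF bij_is_inj[OF that(2)]] by simp
  qed
  have part1: "A \<in> Aut lam \<longleftrightarrow> bij A \<and> doubly_stochastic lam A \<and> doubly_stochastic lam (inv A)"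
    if lin: "linear A" for A :: "'a \<Rightarrow> 'a"
  proof
    assume "A \<in> Aut lam"
    hence b: "bij A" and p: "\<And>x. lam (A x) = lam x" unfolding Aut_def by auto
    have p2: "lam (inv A x) = lam x" for x using p[of "inv A x"] surj_f_inv_f[OF bij_is_surj[OF b]] by simp
    show "bij A \<and> doubly_stochastic lam A \<and> doubly_stochastic lam (inv A)"
      using b lin invlin[OF lin b] p p2 inh unfolding doubly_stochastic_def majorized_def by auto
  next
    assume h: "bij A \<and> doubly_stochastic lam A \<and> doubly_stochastic lam (inv A)"
    hence b: "bij A" and d1: "\<And>x. A x \<in> convex hull (lam_class lam x)"
      and d2: "\<And>x. inv A x \<in> convex hull (lam_class lam x)"
      unfolding doubly_stochastic_def majorized_def by auto
    have "lam (A x) = lam x" for x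
    proof -
      have n1: "norm (A x) \<le> norm x" by (rule norm_hull_le[OF cls d1])
      have "norm (inv A (A x)) \<le> norm (A x)" by (rule norm_hull_le[OF cls d2])
      hence "norm x \<le> norm (A x)" using b by (simp add: bij_is_inj)
      hence e1: "norm (A x) = norm x" using n1 by simp
      have e2: "\<And>z. z \<in> lam_class lam x \<Longrightarrow> norm z = norm x" by (rule cls)
      have "A x \<in> lam_class lam x" by (rule sphere_hull_mem[OF e2 d1 e1])
      thus ?thesis by (simp add: lam_class_def)
    qed
    thus "A \<in> Aut lam" using lin b unfolding Aut_def by auto
  qed
  have part2: "doubly_stochastic lam D" if "D \<in> map_convex_hull (Aut lam)" for D :: "'a \<Rightarrow> 'a"
  proof -
    have "\<exists>n c F. (\<forall>i<n. 0 \<le> c i \<and> F i \<in> Aut lam) \<and> (\<Sum>i<n. c i) = 1 \<and>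
      D = (\<lambda>x. \<Sum>i<(n::nat). c i *\<^sub>R F i x)"
      using that(1) unfolding map_convex_hull_def by simp
    then obtain n :: nat and c :: "nat \<Rightarrow> real" and F :: "nat \<Rightarrow> 'a \<Rightarrow> 'a" where h: "\<forall>i<n. 0 \<le> c i \<and> F i \<in> Aut lam" "(\<Sum>i<n. c i) = 1"
      "D = (\<lambda>x. \<Sum>i<n. c i *\<^sub>R F i x)"
      by blast
    have "linear (\<lambda>x. c i *\<^sub>R F i x)" if "i < n" for i
      using h(1) that unfolding Aut_def by (auto intro: linear_compose_scale_right)
    hence "linear D" unfolding h(3)
      by (intro linear_compose_sum) auto
    moreover have "D x \<in> convex hull (lam_class lam x)" for x
    proof -
      have "F i x \<in> convex hull (lam_class lam x)" if "i < n" for i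
        using h(1) that unfolding Aut_def by (auto intro: inh)
      thus ?thesis unfolding h(3)
        using convex_sum[of "{..<n}" "convex hull (lam_class lam x)" c "\<lambda>i. F i x"] h(1,2)
        by (simp add: convex_convex_hull)
    qed
    ultimately show ?thesis unfolding doubly_stochastic_def majorized_def by auto
  qed
  show ?thesis
  proof (intro conjI allI impI ballI)
    fix A :: "'a \<Rightarrow> 'a" assume "linear A"
    thus "A \<in> Aut lam \<longleftrightarrow> bij A \<and> doubly_stochastic lam A \<and> doubly_stochastic lam (inv A)" by (rule part1)
  next
    fix D assume "D \<in> map_convex_hull (Aut lam)"
    thus "doubly_stochastic lam D" by (rule part2)
  qed
qed

end
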